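(* Let $w$ be the fixed point of the morphism $\psi$ on $\{0,1\}^*$ given by $\psi(1)=100$, $\psi(0)=10$ (i.e. $w=\lim_{k\to\infty}\psi^k(1)=1001010100101\cdots$), written $w=w_1w_2w_3\cdots$. Then for all $n\ge1$, $$w_n=\mathrm{St}\big(\sqrt2-1,\;1-\tfrac12\sqrt2\big)_n=\Big\lfloor (n+1)(\sqrt2-1)+1-\tfrac12\sqrt2\Big\rfloor-\Big\lfloor n(\sqrt2-1)+1-\tfrac12\sqrt2\Big\rfloor.$$
   Context: $\mathrm{St}(\alpha,\beta)_n=\lfloor (n+1)\alpha+\beta\rfloor-\lfloor n\alpha+\beta\rfloor$ for $n=1,2,\dots$; the letters of $w$ are indexed starting from $1$. *)

theory Defs
  imports Complex_Main
begin

definition psi :: "nat \<Rightarrow> nat list" where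
  "psi a = (if a = 1 then [1,0,0] else [1,0])"

definition psi_word :: "nat list \<Rightarrow> nat list" where
  "psi_word xs = concat (map psi xs)"

definition St :: "real \<Rightarrow> real \<Rightarrow> nat \<Rightarrow> int" where
  "St \<alpha> \<beta> n = \<lfloor>(real n + 1) * \<alpha> + \<beta>\<rfloor> - \<lfloor>real n * \<alpha> + \<beta>\<rfloor>"

text \<open>w : nat => nat (letters indexed from 1) is the limit of psi^k(1):
  every word psi^k(1) is a prefix of w.\<close>
definition is_psi_limit :: "(nat \<Rightarrow> nat) \<Rightarrow> bool" where
  "is_psi_limit w \<longleftrightarrow>
     (\<forall>k i. i < length ((psi_word ^^ k) [1]) \<longrightarrow> w (i + 1) = (psi_word ^^ k) [1] ! i)"

end

theory Submission
  imports Defs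
begin

definition aa :: real where "aa = sqrt 2 - 1"
definition bb :: real where "bb = 1 - sqrt 2 / 2"
definition SS :: "nat \<Rightarrow> int" where "SS n = \<lfloor>real n * aa + bb\<rfloor>"
definition uu :: "nat \<Rightarrow> nat" where "uu n = nat (SS (n+1) - SS n)"

lemma s2: "sqrt 2 * sqrt 2 = (2::real)" by simp

lemma s2b: "1.4 < sqrt (2::real)" "sqrt 2 < (2::real)"
proof -
  show "1.4 < sqrt (2::real)" by (rule real_less_rsqrt) (simp add: power2_eq_square)
  show "sqrt 2 < (2::real)" by (rule sqrt2_less_2)
qed

lemma aa_bounds: "0 < aa" "aa < 1" using s2b unfolding aa_def by auto

lemma odd_sq: "(2*(N::int)+1)^2 \<noteq> 2*m^2"
proof
  assume h: "(2*N+1)^2 = 2*m^2"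
  have "odd ((2*N+1)^2)" by simp
  then show False using h by simp
qed

lemma not_int: "real (N+1) * aa + bb \<noteq> of_int k"
proof
  assume h: "real (N+1) * aa + bb = of_int k"
  have "(2 * real N + 1) * sqrt 2 = 2 * (of_int k + real N)"
    using h unfolding aa_def bb_def by (simp add: algebra_simps)
  then have "((2 * real N + 1) * sqrt 2)^2 = (2 * (of_int k + real N))^2" by simp
  then have "(2 * real N + 1)^2 * 2 = 4 * (of_int k + real N)^2"
    by (simp add: power_mult_distrib algebra_simps power2_eq_square)
  then have "real_of_int ((2 * int N + 1)^2) = real_of_int (2 * (k + int N)^2)"
    by simp
  then have "(2 * int N + 1)^2 = 2 * (k + int N)^2" by (simp only: of_int_eq_iff)
  then show False using odd_sq by blast
qed

lemma SS_step: "SS (n+1) = SS n \<or> SS (n+1) = SS n + 1"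
proof -
  have "real (n+1) * aa + bb = (real n * aa + bb) + aa" by (simp add: algebra_simps)
  then show ?thesis using aa_bounds unfolding SS_def
    by (smt (verit) floor_less_iff floor_le_iff le_floor_iff of_int_add of_int_1 floor_correct)
qed

lemma SS_mono: "m \<le> n \<Longrightarrow> SS m \<le> SS n"
proof (induction n rule: dec_induct)
  case base then show ?case by simp
next
  case (step n) then show ?case using SS_step[of n] by auto
qed

lemma uu_int: "int (uu n) = SS (n+1) - SS n"
  using SS_step[of n] unfolding uu_def by auto

definition LL :: "nat \<Rightarrow> nat" where "LL N = 2*N + nat (SS (N+1))"

lemma SS0: "SS 0 = 0" using s2b unfolding SS_def bb_def by (simp add: floor_eq_iff)

lemma SS_nonneg: "SS n \<ge> 0" using SS_mono[of 0 n] SS0 by simp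

lemma key: "SS (LL N + 1) = int N \<and> SS (LL N + 2) = int N + 1"
proof -
  define x where "x = real (N+1) * aa + bb"
  define T where "T = SS (N+1)"
  define f where "f = x - of_int T"
  have T: "T = \<lfloor>x\<rfloor>" unfolding T_def SS_def x_def by simp
  have f0: "0 < f" using not_int[of N T] T unfolding f_def x_def
    by (smt (verit, best) of_int_floor_le)
  have f1: "f < 1" unfolding f_def T by linarith
  have LL: "real (LL N) = 2 * real N + of_int T"
    unfolding LL_def T_def using SS_nonneg[of "N+1"] by simp
  have LL1: "real (LL N + 1) = 2 * real N + of_int T + 1" using LL by simp
  have gen: "\<And>s::real. (2 * real N + t + 1) * (s - 1) + (1 - s/2) - (real N + 1 - (s - 1) * ((real N + 1) * (s - 1) + (1 - s/2) - t))
     = (real N + 1/2) * (s*s - 2)" for t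
    by (simp add: field_simps)
  have "real (LL N + 1) * aa + bb - (real N + 1 - aa * f) = 0"
    unfolding LL1 unfolding f_def x_def aa_def bb_def of_nat_add of_nat_1 gen[of "of_int T" "sqrt 2"] s2
    by simp
  then have eq1: "real (LL N + 1) * aa + bb = real N + 1 - aa * f" by simp
  have eq2: "real (LL N + 2) * aa + bb = real N + 1 + aa * (1 - f)"
    using eq1 by (simp add: algebra_simps)
  have pa: "0 < aa * f" using aa_bounds f0 by simp
  have pb: "aa * f < aa" using mult_strict_left_mono[of f 1 aa] aa_bounds f1 by simp
  have pc: "aa * (1 - f) = aa - aa * f" by (simp add: algebra_simps)
  have p1: "0 < aa * f" "aa * f < 1" using pa pb aa_bounds by linarith+
  have p2: "0 \<le> aa * (1 - f)" "aa * (1 - f) < 1" using pa pb pc aa_bounds by linarith+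
  show ?thesis unfolding SS_def using eq1 eq2 p1 p2
    by (simp add: floor_eq_iff)
qed

lemma SS1: "SS 1 = 0" using SS0 key[of 0] SS_mono[of 0 1] SS_mono[of 1 "LL 0 + 1"]
  by (simp add: LL_def)

definition pre :: "nat \<Rightarrow> nat list" where "pre N = map uu [1..<N+1]"

lemma pre_Suc: "pre (Suc N) = pre N @ [uu (N+1)]" unfolding pre_def by simp

lemma pre_add: "pre (N + k) = pre N @ map uu [N+1..<N+k+1]"
  by (induction k) (simp_all add: pre_Suc)

lemma psi_word_app: "psi_word (xs @ ys) = psi_word xs @ psi_word ys"
  unfolding psi_word_def by simp

lemma uu_le1: "uu n \<le> 1" using SS_step[of n] unfolding uu_def by auto

lemma LL_Suc: "LL (Suc N) = LL N + 2 + uu (N+1)"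
  using uu_int[of "N+1"] SS_nonneg[of "N+1"] SS_nonneg[of "N+2"] unfolding LL_def
  by (simp add: nat_diff_distrib' algebra_simps)

lemma block: "psi (uu (N+1)) = map uu [LL N + 1..<LL (Suc N) + 1]"
proof -
  have k1: "SS (LL N + 1) = int N" "SS (LL N + 2) = int N + 1" using key[of N] by auto
  have k2: "SS (LL (Suc N) + 1) = int N + 1" using key[of "Suc N"] by simp
  have u1: "uu (LL N + 1) = 1" using k1 unfolding uu_def by (simp add: add.assoc)
  have mid: "SS j = int N + 1" if "LL N + 2 \<le> j" "j \<le> LL (Suc N) + 1" for j
    using SS_mono[OF that(1)] SS_mono[OF that(2)] k1 k2 by simp
  have b3: "LL N + 3 \<le> LL (Suc N) + 1" using LL_Suc[of N] by simp
  have m2: "SS (LL N + 2) = int N + 1" using k1 by simp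
  have m3: "SS (LL N + 2 + 1) = int N + 1" using mid b3 by (simp add: add.assoc)
  have "int (uu (LL N + 2)) = 0" using uu_int[of "LL N + 2"] m2 m3 by simp
  then have u2: "uu (LL N + 2) = 0" by simp
  have u3: "uu (LL N + 3) = 0" if "uu (N+1) = 1"
  proof -
    have b4: "LL N + 3 + 1 \<le> LL (Suc N) + 1" using LL_Suc[of N] that by simp
    have m4: "SS (LL N + 3 + 1) = int N + 1" using mid b4 by simp
    have m3': "SS (LL N + 3) = int N + 1" using mid b3 by simp
    have "int (uu (LL N + 3)) = 0" using uu_int[of "LL N + 3"] m4 m3' by simp
    then show ?thesis by simp
  qed
  show ?thesis
  proof (cases "uu (N+1) = 1")
    case True
    then have "[LL N + 1..<LL (Suc N) + 1] = [LL N + 1, LL N + 2, LL N + 3]"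
      using LL_Suc[of N] by (simp add: upt_rec)
    then show ?thesis using True u1 u2 u3 by (simp add: psi_def)
  next
    case False
    then have z: "uu (N+1) = 0" using uu_le1[of "N+1"] by simp
    then have "[LL N + 1..<LL (Suc N) + 1] = [LL N + 1, LL N + 2]"
      using LL_Suc[of N] by (simp add: upt_rec)
    then show ?thesis using z u1 u2 by (simp add: psi_def)
  qed
qed

lemma psi_pre: "psi_word (pre N) = pre (LL N)"
proof (induction N)
  case 0
  then show ?case using SS1 by (simp add: pre_def psi_word_def LL_def)
next
  case (Suc N)
  have "pre (LL (Suc N)) = pre (LL N) @ map uu [LL N + 1..<LL (Suc N) + 1]"
    using pre_add[of "LL N" "2 + uu (N+1)"] LL_Suc[of N] by (simp add: add.assoc)
  then show ?case using Suc block[of N]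
    by (simp add: pre_Suc psi_word_app psi_word_def)
qed

lemma LL_ge: "N \<ge> 1 \<Longrightarrow> LL N \<ge> N + 1" unfolding LL_def by simp

lemma iter: "\<exists>l. l \<ge> k + 1 \<and> (psi_word ^^ k) [1] = pre l"
proof (induction k)
  case 0
  have "pre 1 = [1]" using SS1 key[of 0] unfolding pre_def uu_def LL_def by simp
  then show ?case by (intro exI[of _ 1]) simp
next
  case (Suc k)
  then obtain l where l: "l \<ge> k + 1" "(psi_word ^^ k) [1] = pre l" by blast
  show ?case using l LL_ge[of l] psi_pre[of l] by (intro exI[of _ "LL l"]) simp
qed

lemma length_pre: "length (pre l) = l" unfolding pre_def by simp

lemma nth_pre: "i < l \<Longrightarrow> pre l ! i = uu (i+1)" unfolding pre_def by (subst nth_map_upt) auto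

theorem lemma2:
  shows "(\<exists>w. is_psi_limit w) \<and>
         (\<forall>w. is_psi_limit w \<longrightarrow>
            (\<forall>n\<ge>1. int (w n) = St (sqrt 2 - 1) (1 - sqrt 2 / 2) n))"
proof
  show "\<exists>w. is_psi_limit w"
  proof
    show "is_psi_limit uu" unfolding is_psi_limit_def
    proof (intro allI impI)
      fix k i assume "i < length ((psi_word ^^ k) [1])"
      then show "uu (i + 1) = (psi_word ^^ k) [1] ! i"
        using iter[of k] length_pre nth_pre by auto
    qed
  qed
next
  show "\<forall>w. is_psi_limit w \<longrightarrow> (\<forall>n\<ge>1. int (w n) = St (sqrt 2 - 1) (1 - sqrt 2 / 2) n)"
  proof (intro allI impI)
    fix w n assume w: "is_psi_limit w" and n: "(1::nat) \<le> n"
    obtain l where l: "l \<ge> n + 1" "(psi_word ^^ n) [1] = pre l" using iter[of n] by blast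
    have "n - 1 < length ((psi_word ^^ n) [1])" using l length_pre[of l] by simp
    then have "w (n - 1 + 1) = (psi_word ^^ n) [1] ! (n - 1)"
      using w unfolding is_psi_limit_def by blast
    then have "w n = uu n" using l nth_pre[of "n-1" l] n by simp
    then show "int (w n) = St (sqrt 2 - 1) (1 - sqrt 2 / 2) n"
      using uu_int[of n] unfolding St_def SS_def aa_def bb_def by (simp add: algebra_simps)
  qed
qed

end
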